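(* For every $N\in\mathbb{N}$, $\mathrm{Dec}_N=\mathrm{CP}_N+\mathrm{coCP}_N=(\mathrm{CP}_N\cap\mathrm{coCP}_N)^*$, where $(\mathcal{K})^*=\{|\mu\rangle\in(\mathbb{R}^4)^{\otimes N}:\langle\mu|\kappa\rangle\ge0\ \forall|\kappa\rangle\in\mathcal{K}\}$ with the Euclidean inner product. In particular, a Pauli diagonal map is decomposable iff it is the sum of a completely positive Pauli diagonal map and a completely copositive Pauli diagonal map.
   Context: Pauli matrices $\sigma_1=I_2$, $\sigma_2=\begin{pmatrix}0&1\\1&0\end{pmatrix}$, $\sigma_3=\begin{pmatrix}1&0\\0&-1\end{pmatrix}$, $\sigma_4=\begin{pmatrix}0&-i\\i&0\end{pmatrix}$. For $|\mu\rangle\in(\mathbb{R}^4)^{\otimes N}$, $\Pi^{(N)}_\mu(X)=\sum_{i_1,\dots,i_N}\frac{\mu_{i_1\cdots i_N}}{2^N}\mathrm{Tr}[(\sigma_{i_1}\otimes\cdots\otimes\sigma_{i_N})X]\sigma_{i_1}\otimes\cdots\otimes\sigma_{i_N}$ on $\mathcal{M}_2^{\otimes N}$. $\mathrm{CP}_N$ (resp. $\mathrm{coCP}_N$) is the set of $|\mu\rangle$ such that $\Pi^{(N)}_\mu$ (resp. $\vartheta_2^{\otimes N}\circ\Pi^{(N)}_\mu$, $\vartheta_2$ the transpose) is completely positive. $\mathrm{Dec}_N$ is the set of $|\mu\rangle$ such that $\Pi^{(N)}_\mu=T+\vartheta_2^{\otimes N}\circ S$ for some completely positive maps $T,S:\mathcal{M}_2^{\otimes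 N}\to\mathcal{M}_2^{\otimes N}$ (not required to be Pauli diagonal). *)

theory Defs
  imports "HOL-Analysis.Analysis" "Jordan_Normal_Form.Matrix"
begin

(* Pauli matrices: index 0,1,2,3 stands for sigma_1 = I, sigma_2 = X, sigma_3 = Z, sigma_4 = Y *)
definition pauli :: "nat \<Rightarrow> nat \<Rightarrow> nat \<Rightarrow> complex" where
  "pauli i a b =
     (if i = 0 then (if a = b then 1 else 0)
      else if i = 1 then (if a \<noteq> b then 1 else 0)
      else if i = 2 then (if a = b then (if a = 0 then 1 else -1) else 0)
      else (if a = 0 \<and> b = 1 then - \<i> else if a = 1 \<and> b = 0 then \<i> else 0))"

(* k-th tensor factor of basis index a of (C^2)^{\<otimes> N} *)
definition qbit :: "nat \<Rightarrow> nat \<Rightarrow> nat" where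
  "qbit k a = (a div 2 ^ k) mod 2"

definition pidx :: "nat \<Rightarrow> nat list set" where
  "pidx N = {is. length is = N \<and> (\<forall>i\<in>set is. i < 4)}"

(* elements of (R^4)^{\<otimes> N}, as real functions supported on the multi-indices *)
definition tens :: "nat \<Rightarrow> (nat list \<Rightarrow> real) set" where
  "tens N = {\<mu>. \<forall>is. is \<notin> pidx N \<longrightarrow> \<mu> is = 0}"

(* sigma_{i_1} \<otimes> ... \<otimes> sigma_{i_N} as a 2^N x 2^N matrix *)
definition pauli_tensor :: "nat list \<Rightarrow> complex mat" where
  "pauli_tensor is = mat (2 ^ length is) (2 ^ length is)
     (\<lambda>(a, b). \<Prod>k<length is. pauli (is ! k) (qbit k a) (qbit k b))"

definition mtrace :: "complex mat \<Rightarrow> complex" where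
  "mtrace A = (\<Sum>i<dim_row A. A $$ (i, i))"

definition pauli_map :: "nat \<Rightarrow> (nat list \<Rightarrow> real) \<Rightarrow> complex mat \<Rightarrow> complex mat" where
  "pauli_map N \<mu> X = mat (2 ^ N) (2 ^ N) (\<lambda>(a, b).
     \<Sum>is\<in>pidx N. complex_of_real (\<mu> is / 2 ^ N) * mtrace (pauli_tensor is * X)
                     * pauli_tensor is $$ (a, b))"

definition psd :: "nat \<Rightarrow> complex mat \<Rightarrow> bool" where
  "psd n A \<longleftrightarrow> A \<in> carrier_mat n n \<and>
     (\<forall>v \<in> carrier_vec n. let z = (\<Sum>i<n. \<Sum>j<n. cnj (v $ i) * A $$ (i, j) * v $ j)
                          in Im z = 0 \<and> Re z \<ge> 0)"

definition lin_map :: "nat \<Rightarrow> (complex mat \<Rightarrow> complex mat) \<Rightarrow> bool" where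
  "lin_map d T \<longleftrightarrow>
     (\<forall>X \<in> carrier_mat d d. T X \<in> carrier_mat d d) \<and>
     (\<forall>X \<in> carrier_mat d d. \<forall>Y \<in> carrier_mat d d. T (X + Y) = T X + T Y) \<and>
     (\<forall>c. \<forall>X \<in> carrier_mat d d. T (c \<cdot>\<^sub>m X) = c \<cdot>\<^sub>m T X)"

(* id_k \<otimes> T applied to a (k d) x (k d) matrix viewed as k x k blocks of d x d matrices *)
definition ampl :: "nat \<Rightarrow> nat \<Rightarrow> (complex mat \<Rightarrow> complex mat) \<Rightarrow> complex mat \<Rightarrow> complex mat" where
  "ampl k d T X = mat (k * d) (k * d) (\<lambda>(i, j).
     T (mat d d (\<lambda>(a, b). X $$ ((i div d) * d + a, (j div d) * d + b))) $$ (i mod d, j mod d))"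

definition cp_map :: "nat \<Rightarrow> (complex mat \<Rightarrow> complex mat) \<Rightarrow> bool" where
  "cp_map d T \<longleftrightarrow> lin_map d T \<and> (\<forall>k. \<forall>X. psd (k * d) X \<longrightarrow> psd (k * d) (ampl k d T X))"

definition CP :: "nat \<Rightarrow> (nat list \<Rightarrow> real) set" where
  "CP N = {\<mu> \<in> tens N. cp_map (2 ^ N) (pauli_map N \<mu>)}"

definition coCP :: "nat \<Rightarrow> (nat list \<Rightarrow> real) set" where
  "coCP N = {\<mu> \<in> tens N. cp_map (2 ^ N) (\<lambda>X. transpose_mat (pauli_map N \<mu> X))}"

definition Dec :: "nat \<Rightarrow> (nat list \<Rightarrow> real) set" where
  "Dec N = {\<mu> \<in> tens N. \<exists>T S. cp_map (2 ^ N) T \<and> cp_map (2 ^ N) S \<and>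
     (\<forall>X \<in> carrier_mat (2 ^ N) (2 ^ N). pauli_map N \<mu> X = T X + transpose_mat (S X))}"

definition msum :: "('a \<Rightarrow> real) set \<Rightarrow> ('a \<Rightarrow> real) set \<Rightarrow> ('a \<Rightarrow> real) set" where
  "msum A B = {\<lambda>x. a x + b x | a b. a \<in> A \<and> b \<in> B}"

definition dual_cone :: "nat \<Rightarrow> (nat list \<Rightarrow> real) set \<Rightarrow> (nat list \<Rightarrow> real) set" where
  "dual_cone N K = {\<mu> \<in> tens N. \<forall>\<kappa>\<in>K. (\<Sum>is\<in>pidx N. \<mu> is * \<kappa> is) \<ge> 0}"

end

theory Submission imports Defs begin

definition hh :: "nat \<Rightarrow> nat \<Rightarrow> real" where
  "hh i j = (if i = 0 \<or> j = 0 \<or> i = j then 1 else -1)"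
definition nu :: "nat \<Rightarrow> real" where
  "nu i = (if i = 0 then 1 else -1)"
definition yp :: "nat \<Rightarrow> nat \<Rightarrow> nat \<Rightarrow> complex" where
  "yp j x y = (\<Sum>z<2. pauli 3 x z * pauli j z y)"

lemma lt2: "(x::nat) < 2 \<Longrightarrow> x = 0 \<or> x = 1" by auto
lemma lt4: "(x::nat) < 4 \<Longrightarrow> x = 0 \<or> x = 1 \<or> x = 2 \<or> x = 3" by auto

lemma sum4: "(\<Sum>j::nat<4. f j) = f 0 + f 1 + f 2 + (f 3 :: 'a::comm_monoid_add)"
  by (simp add: eval_nat_numeral add.commute add.left_commute)
lemma sum2: "(\<Sum>j::nat<2. f j) = f 0 + (f 1 :: 'a::comm_monoid_add)"
  by (simp add: eval_nat_numeral add.commute)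

lemma Q1: "i<4 \<Longrightarrow> a<2 \<Longrightarrow> b<2 \<Longrightarrow> c<2 \<Longrightarrow> e<2 \<Longrightarrow>
  (\<Sum>j<4. complex_of_real (hh i j) * pauli j a c * cnj (pauli j b e)) = 2 * pauli i e c * pauli i a b"
  apply (simp only: sum4)
  apply (drule lt4, (drule lt2)+)
  apply (elim disjE; simp add: pauli_def hh_def mult.assoc)
  done

lemma Q2: "i<4 \<Longrightarrow> a<2 \<Longrightarrow> b<2 \<Longrightarrow> c<2 \<Longrightarrow> e<2 \<Longrightarrow>
  complex_of_real (nu i) * (\<Sum>j<4. complex_of_real (hh i j) * yp j a c * cnj (yp j b e)) = 2 * pauli i e c * pauli i b a"
  apply (simp only: sum4 yp_def sum2)
  apply (drule lt4, (drule lt2)+)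
  apply (elim disjE; simp add: pauli_def hh_def nu_def mult.assoc)
  done

lemma Q3: "i<4 \<Longrightarrow> j < 4 \<Longrightarrow> (\<Sum>x<2. \<Sum>y<2. cnj (yp j x y) * yp i x y) = (if i = j then 2 else 0)"
  apply (simp only: yp_def sum2)
  apply (drule lt4, drule lt4)
  apply (elim disjE; simp add: pauli_def)
  done

lemma Q4: "i<4 \<Longrightarrow> j < 4 \<Longrightarrow> (\<Sum>x<2. \<Sum>y<2. cnj (pauli j x y) * pauli i x y) = (if i = j then 2 else 0)"
  apply (simp only: sum2)
  apply (drule lt4, drule lt4)
  apply (elim disjE; simp add: pauli_def)
  done

lemma Q5: "i<4 \<Longrightarrow> k < 4 \<Longrightarrow> (\<Sum>j<4. hh i j * hh k j) = (if i = k then 4 else 0)"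
  apply (simp only: sum4)
  apply (drule lt4, drule lt4)
  apply (elim disjE; simp add: hh_def)
  done

lemma pidx_0: "pidx 0 = {[]}" by (auto simp: pidx_def)
lemma pidx_Suc: "pidx (Suc N) = (\<lambda>(j,js). j # js) ` ({..<4} \<times> pidx N)"
  unfolding pidx_def
  by (auto simp: length_Suc_conv image_iff)
lemma finite_pidx: "finite (pidx N)"
  by (induction N) (auto simp: pidx_0 pidx_Suc)
lemma inj_cons: "inj_on (\<lambda>(j::nat,js). j # js) A" by (auto simp: inj_on_def)

lemma PS1: "(\<Sum>js\<in>pidx N. \<Prod>k<N. f k (js!k)) = (\<Prod>k<N. \<Sum>j<4. (f k j :: 'a::comm_semiring_1))"
proof (induction N arbitrary: f)
  case 0 then show ?case by (simp add: pidx_0)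
next
  case (Suc N)
  have "(\<Sum>js\<in>pidx (Suc N). \<Prod>k<Suc N. f k (js!k))
     = (\<Sum>(j,js)\<in>{..<4} \<times> pidx N. \<Prod>k<Suc N. f k ((j#js)!k))"
    unfolding pidx_Suc by (subst sum.reindex[OF inj_cons]) (simp add: comp_def case_prod_beta')
  also have "\<dots> = (\<Sum>j<4. \<Sum>js\<in>pidx N. f 0 j * (\<Prod>k<N. f (Suc k) (js!k)))"
    by (subst sum.cartesian_product[symmetric]) (simp add: prod.lessThan_Suc_shift del: prod.lessThan_Suc)
  also have "\<dots> = (\<Sum>j<4. f 0 j) * (\<Sum>js\<in>pidx N. (\<Prod>k<N. f (Suc k) (js!k)))"
    by (simp add: sum_distrib_right sum_distrib_left[symmetric])
  also have "\<dots> = (\<Prod>k<Suc N. \<Sum>j<4. f k j)"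
    using Suc[of "\<lambda>k. f (Suc k)"] by (simp add: prod.lessThan_Suc_shift del: prod.lessThan_Suc)
  finally show ?case .
qed

lemma sum_split_add: "(\<Sum>p<n+(d::nat). f p) = (\<Sum>p<n. f p) + (\<Sum>i<d. f (n+i))"
  by (induction d) (auto simp: add.assoc)

lemma sum_dd: "(\<Sum>p<(m::nat)*d. f p) = (\<Sum>a<m. \<Sum>i<d. f (a*d+i))"
proof (induction m)
  case (Suc m)
  have "(\<Sum>p<Suc m * d. f p) = (\<Sum>p<m*d + d. f p)" by (simp add: add.commute)
  also have "\<dots> = (\<Sum>p<m*d. f p) + (\<Sum>i<d. f (m*d+i))" by (rule sum_split_add)
  finally show ?case using Suc by simp
qed simp

lemma sum_double: "(\<Sum>a<2*(M::nat). F a) = (\<Sum>a<M. F (2*a) + F (2*a+1))"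
  by (induction M) (auto simp: add.assoc)

lemma qbit_e: "qbit 0 (2*a) = 0" "qbit 0 (Suc (2*a)) = 1" "qbit (Suc k) (2*a) = qbit k a"
   "qbit (Suc k) (Suc (2*a)) = qbit k a"
  by (simp_all add: qbit_def div_mult2_eq)

lemma PS2: "(\<Sum>a<2^N. \<Prod>k<N. g k (qbit k a)) = (\<Prod>k<N. \<Sum>x<2. (g k x :: 'a::comm_semiring_1))"
proof (induction N arbitrary: g)
  case 0 then show ?case by simp
next
  case (Suc N)
  have "(\<Sum>a<2^Suc N. \<Prod>k<Suc N. g k (qbit k a))
      = (\<Sum>a<2^N. (\<Prod>k<Suc N. g k (qbit k (2*a+0))) + (\<Prod>k<Suc N. g k (qbit k (2*a+1))))"
    by (simp add: sum_double)
  also have "\<dots> = (\<Sum>a<2^N. g 0 0 * (\<Prod>k<N. g (Suc k) (qbit k a)) + g 0 1 * (\<Prod>k<N. g (Suc k) (qbit k a)))"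
    by (simp add: prod.lessThan_Suc_shift qbit_e del: prod.lessThan_Suc)
  also have "\<dots> = (g 0 0 + g 0 1) * (\<Sum>a<2^N. \<Prod>k<N. g (Suc k) (qbit k a))"
    by (simp add: sum.distrib sum_distrib_left distrib_right)
  also have "\<dots> = (\<Prod>k<Suc N. \<Sum>x<2. g k x)"
    using Suc[of "\<lambda>k. g (Suc k)"] by (simp add: prod.lessThan_Suc_shift sum2 del: prod.lessThan_Suc)
  finally show ?case .
qed

lemma qbit_lt: "qbit k a < 2" by (simp add: qbit_def)

definition nnc :: "complex \<Rightarrow> bool" where "nnc z \<longleftrightarrow> Im z = 0 \<and> Re z \<ge> 0"

lemma nnc_add: "nnc a \<Longrightarrow> nnc b \<Longrightarrow> nnc (a + b)" by (simp add: nnc_def)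
lemma nnc_sum: "(\<And>x. x \<in> A \<Longrightarrow> nnc (f x)) \<Longrightarrow> nnc (sum f A)"
  by (induction A rule: infinite_finite_induct) (auto simp: nnc_def)
lemma nnc_scale: "c \<ge> 0 \<Longrightarrow> nnc a \<Longrightarrow> nnc (complex_of_real c * a)" by (simp add: nnc_def)
lemma nnc_cnj_mult: "nnc (cnj s * s)"
  by (simp add: nnc_def)

definition qf :: "nat \<Rightarrow> complex mat \<Rightarrow> (nat \<Rightarrow> complex) \<Rightarrow> complex" where
  "qf n A v = (\<Sum>i<n. \<Sum>j<n. cnj (v i) * A $$ (i, j) * v j)"

lemma psdD: "psd n A \<Longrightarrow> nnc (qf n A v)"
proof -
  assume "psd n A"
  then have "\<forall>w\<in>carrier_vec n. nnc (qf n A (\<lambda>i. w $ i))"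
    unfolding psd_def qf_def nnc_def Let_def by blast
  then have "nnc (qf n A (\<lambda>i. vec n v $ i))" by simp
  moreover have "qf n A (\<lambda>i. vec n v $ i) = qf n A v"
    unfolding qf_def by (intro sum.cong refl) auto
  ultimately show ?thesis by simp
qed

lemma psdI: assumes "A \<in> carrier_mat n n" "\<And>v. nnc (qf n A v)" shows "psd n A"
proof -
  have "\<forall>v\<in>carrier_vec n. nnc (qf n A (\<lambda>i. v$i))" using assms(2) by blast
  then show ?thesis using assms(1) unfolding psd_def Let_def nnc_def qf_def by blast
qed

definition Em :: "nat \<Rightarrow> nat \<Rightarrow> nat \<Rightarrow> complex mat" where
  "Em d a b = mat d d (\<lambda>(x, y). if x = a \<and> y = b then 1 else 0)"

definition chi :: "nat \<Rightarrow> (complex mat \<Rightarrow> complex mat) \<Rightarrow> complex mat \<Rightarrow> complex" where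
  "chi d \<Phi> L = (\<Sum>a<d. \<Sum>b<d. \<Sum>i<d. \<Sum>j<d. cnj (L $$ (i, a)) * \<Phi> (Em d a b) $$ (i, j) * L $$ (j, b))"

lemma lt_mult_add: "a < m \<Longrightarrow> i < (d::nat) \<Longrightarrow> a * d + i < m * d"
proof -
  assume "a < m" "i < d"
  then have "a * d + i < a * d + d" by simp
  also have "\<dots> = Suc a * d" by simp
  also have "\<dots> \<le> m * d" using \<open>a < m\<close> by (intro mult_right_mono) auto
  finally show ?thesis .
qed

lemma divmod_ad: "i < (d::nat) \<Longrightarrow> (a * d + i) div d = a \<and> (a * d + i) mod d = i"
  by auto

definition Omega :: "nat \<Rightarrow> complex mat" where
  "Omega d = mat (d*d) (d*d) (\<lambda>(p, q). if p mod d = p div d \<and> q mod d = q div d then 1 else 0)"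

lemma psd_Omega: "psd (d*d) (Omega d)"
proof (rule psdI)
  show "Omega d \<in> carrier_mat (d*d) (d*d)" by (simp add: Omega_def)
  fix v :: "nat \<Rightarrow> complex"
  define P where "P = (\<lambda>p. p mod d = p div d)"
  define s where "s = (\<Sum>q<d*d. if P q then v q else 0)"
  have "qf (d*d) (Omega d) v = (\<Sum>p<d*d. \<Sum>q<d*d. (if P p then cnj (v p) else 0) * (if P q then v q else 0))"
    unfolding qf_def Omega_def P_def by (intro sum.cong refl) auto
  also have "\<dots> = (\<Sum>p<d*d. (if P p then cnj (v p) else 0)) * s"
    unfolding s_def by (simp add: sum_product)
  also have "(\<Sum>p<d*d. (if P p then cnj (v p) else 0)) = cnj s"
    unfolding s_def cnj_sum by (intro sum.cong) auto
  finally show "nnc (qf (d*d) (Omega d) v)" using nnc_cnj_mult by simp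
qed

lemma ampl_Omega: "a < d \<Longrightarrow> i < d \<Longrightarrow> b < d \<Longrightarrow> j < d \<Longrightarrow>
   ampl d d \<Phi> (Omega d) $$ (a*d+i, b*d+j) = \<Phi> (Em d a b) $$ (i, j)"
proof -
  assume h: "a < d" "i < d" "b < d" "j < d"
  have "mat d d (\<lambda>(x, y). Omega d $$ (a * d + x, b * d + y)) = Em d a b"
    by (rule eq_matI) (use h in \<open>auto simp: Em_def Omega_def lt_mult_add\<close>)
  then show ?thesis using h by (simp add: ampl_def lt_mult_add)
qed

lemma cp_chi: "cp_map d \<Phi> \<Longrightarrow> nnc (chi d \<Phi> L)"
proof -
  assume "cp_map d \<Phi>"
  then have "psd (d*d) (ampl d d \<Phi> (Omega d))" using psd_Omega unfolding cp_map_def by blast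
  then have "nnc (qf (d*d) (ampl d d \<Phi> (Omega d)) (\<lambda>p. L $$ (p mod d, p div d)))" by (rule psdD)
  also have "qf (d*d) (ampl d d \<Phi> (Omega d)) (\<lambda>p. L $$ (p mod d, p div d))
    = (\<Sum>a<d. \<Sum>i<d. \<Sum>b<d. \<Sum>j<d. cnj (L $$ (i, a)) * \<Phi> (Em d a b) $$ (i, j) * L $$ (j, b))"
    unfolding qf_def sum_dd by (intro sum.cong refl) (simp add: ampl_Omega)
  also have "\<dots> = chi d \<Phi> L"
    unfolding chi_def by (intro sum.cong refl sum.swap)
  finally show ?thesis .
qed

lemma perm4: "(\<Sum>p\<in>P. \<Sum>q\<in>Q. \<Sum>r\<in>R. \<Sum>u\<in>U. (F p q r u::'a::comm_monoid_add)) = (\<Sum>r\<in>R. \<Sum>u\<in>U. \<Sum>p\<in>P. \<Sum>q\<in>Q. F p q r u)"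
proof -
  have "(\<Sum>p\<in>P. \<Sum>q\<in>Q. \<Sum>r\<in>R. \<Sum>u\<in>U. F p q r u) = (\<Sum>p\<in>P. \<Sum>r\<in>R. \<Sum>q\<in>Q. \<Sum>u\<in>U. F p q r u)"
    by (intro sum.cong refl sum.swap)
  also have "\<dots> = (\<Sum>p\<in>P. \<Sum>r\<in>R. \<Sum>u\<in>U. \<Sum>q\<in>Q. F p q r u)"
    by (intro sum.cong refl sum.swap)
  also have "\<dots> = (\<Sum>r\<in>R. \<Sum>p\<in>P. \<Sum>u\<in>U. \<Sum>q\<in>Q. F p q r u)"
    by (rule sum.swap)
  also have "\<dots> = (\<Sum>r\<in>R. \<Sum>u\<in>U. \<Sum>p\<in>P. \<Sum>q\<in>Q. F p q r u)"
    by (intro sum.cong refl sum.swap)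
  finally show ?thesis .
qed

definition Wm :: "nat \<Rightarrow> 'i set \<Rightarrow> ('i \<Rightarrow> real) \<Rightarrow> ('i \<Rightarrow> complex mat) \<Rightarrow> complex mat \<Rightarrow> complex mat" where
  "Wm d A c K X = mat d d (\<lambda>(a, b). \<Sum>s\<in>A. complex_of_real (c s) *
      (\<Sum>x<d. \<Sum>y<d. K s $$ (a, x) * X $$ (x, y) * cnj (K s $$ (b, y))))"

lemma Wm_idx: "a < d \<Longrightarrow> b < d \<Longrightarrow> Wm d A c K X $$ (a, b) = (\<Sum>s\<in>A. complex_of_real (c s) *
      (\<Sum>x<d. \<Sum>y<d. K s $$ (a, x) * X $$ (x, y) * cnj (K s $$ (b, y))))"
  by (simp add: Wm_def)

lemma Wm_carrier: "Wm d A c K X \<in> carrier_mat d d" by (simp add: Wm_def)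
lemma Wm_dims[simp]: "dim_row (Wm d A c K X) = d" "dim_col (Wm d A c K X) = d" by (simp_all add: Wm_def)

lemma lin_Wm: "lin_map d (Wm d A c K)"
  unfolding lin_map_def
proof (intro conjI ballI allI)
  fix X Y :: "complex mat" assume X: "X \<in> carrier_mat d d" and Y: "Y \<in> carrier_mat d d"
  show "Wm d A c K (X + Y) = Wm d A c K X + Wm d A c K Y"
    by (rule eq_matI) (use X Y in \<open>auto simp: Wm_idx Wm_carrier distrib_left distrib_right sum.distrib\<close>)
next
  fix X :: "complex mat" and z assume X: "X \<in> carrier_mat d d"
  show "Wm d A c K (z \<cdot>\<^sub>m X) = z \<cdot>\<^sub>m Wm d A c K X"
    by (rule eq_matI) (use X in \<open>auto simp: Wm_idx Wm_carrier sum_distrib_left mult.assoc mult.left_commute\<close>)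
qed (simp add: Wm_carrier)

lemma qf_ampl_Wm: "qf (k*d) (ampl k d (Wm d A c K) X) v =
   (\<Sum>s\<in>A. complex_of_real (c s) * qf (k*d) X (\<lambda>r. \<Sum>t<d. v (r div d * d + t) * cnj (K s $$ (t, r mod d))))"
proof -
  define G where "G = (\<lambda>s \<alpha> \<beta> t t' x y. complex_of_real (c s) * (cnj (v (\<alpha>*d+t)) * K s $$ (t, x) *
        X $$ (\<alpha>*d+x, \<beta>*d+y) * cnj (K s $$ (t', y)) * v (\<beta>*d+t')))"
  have "qf (k*d) (ampl k d (Wm d A c K) X) v = (\<Sum>\<alpha><k. \<Sum>t<d. \<Sum>\<beta><k. \<Sum>t'<d.
       cnj (v (\<alpha>*d+t)) * (\<Sum>s\<in>A. complex_of_real (c s) * (\<Sum>x<d. \<Sum>y<d. K s $$ (t, x) *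
        X $$ (\<alpha>*d+x, \<beta>*d+y) * cnj (K s $$ (t', y)))) * v (\<beta>*d+t'))"
    unfolding qf_def sum_dd
    by (intro sum.cong refl) (simp add: ampl_def lt_mult_add Wm_idx)
  also have "\<dots> = (\<Sum>\<alpha><k. \<Sum>t<d. \<Sum>\<beta><k. \<Sum>t'<d. \<Sum>s\<in>A. \<Sum>x<d. \<Sum>y<d. G s \<alpha> \<beta> t t' x y)"
    unfolding G_def
    by (simp add: sum_distrib_left sum_distrib_right mult.assoc mult.commute mult.left_commute)
  also have "\<dots> = (\<Sum>s\<in>A. \<Sum>\<alpha><k. \<Sum>\<beta><k. \<Sum>t<d. \<Sum>t'<d. \<Sum>x<d. \<Sum>y<d. G s \<alpha> \<beta> t t' x y)"
    by (simp only: sum.swap[of _ "{..<d}" A] sum.swap[of _ "{..<k}" A] sum.swap[of _ "{..<d}" "{..<k}"])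
  also have "\<dots> = (\<Sum>s\<in>A. \<Sum>\<alpha><k. \<Sum>\<beta><k. \<Sum>x<d. \<Sum>y<d. \<Sum>t<d. \<Sum>t'<d. G s \<alpha> \<beta> t t' x y)"
    by (intro sum.cong refl perm4)
  also have "\<dots> = (\<Sum>s\<in>A. \<Sum>\<alpha><k. \<Sum>x<d. \<Sum>\<beta><k. \<Sum>y<d. \<Sum>t<d. \<Sum>t'<d. G s \<alpha> \<beta> t t' x y)"
    by (simp only: sum.swap[of _ "{..<d}" "{..<k}"])
  also have "\<dots> = (\<Sum>s\<in>A. complex_of_real (c s) * qf (k*d) X (\<lambda>r. \<Sum>t<d. v (r div d * d + t) * cnj (K s $$ (t, r mod d))))"
    unfolding qf_def sum_dd G_def
    by (intro sum.cong refl)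
       (simp add: cnj_sum sum_distrib_left sum_distrib_right mult.assoc mult.commute mult.left_commute)
  finally show ?thesis .
qed

lemma cp_Wm: assumes "\<And>s. s \<in> A \<Longrightarrow> c s \<ge> 0" shows "cp_map d (Wm d A c K)"
  unfolding cp_map_def
proof (intro conjI allI impI lin_Wm)
  fix k X assume X: "psd (k * d) X"
  show "psd (k * d) (ampl k d (Wm d A c K) X)"
  proof (rule psdI)
    show "ampl k d (Wm d A c K) X \<in> carrier_mat (k * d) (k * d)" by (simp add: ampl_def)
    fix v
    show "nnc (qf (k * d) (ampl k d (Wm d A c K) X) v)"
      unfolding qf_ampl_Wm
      by (intro nnc_sum nnc_scale assms psdD[OF X])
  qed
qed

definition ptensor :: "(nat \<Rightarrow> nat \<Rightarrow> nat \<Rightarrow> complex) \<Rightarrow> nat list \<Rightarrow> complex mat" where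
  "ptensor F is = mat (2 ^ length is) (2 ^ length is) (\<lambda>(a, b). \<Prod>k<length is. F (is!k) (qbit k a) (qbit k b))"

lemma pt_pauli: "pauli_tensor = ptensor pauli"
  by (rule ext) (simp add: pauli_tensor_def ptensor_def)

lemma pidx_len: "is \<in> pidx N \<Longrightarrow> length is = N" by (simp add: pidx_def)
lemma pidx_lt: "is \<in> pidx N \<Longrightarrow> k < N \<Longrightarrow> is ! k < 4" by (simp add: pidx_def)

lemma pt_idx: "is \<in> pidx N \<Longrightarrow> a < 2^N \<Longrightarrow> b < 2^N \<Longrightarrow>
   ptensor F is $$ (a, b) = (\<Prod>k<N. F (is!k) (qbit k a) (qbit k b))"
  by (simp add: ptensor_def pidx_len)
lemma pt_carrier: "is \<in> pidx N \<Longrightarrow> ptensor F is \<in> carrier_mat (2^N) (2^N)"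
  by (simp add: ptensor_def pidx_len)

definition HH :: "nat \<Rightarrow> nat list \<Rightarrow> nat list \<Rightarrow> real" where
  "HH N is js = (\<Prod>k<N. hh (is!k) (js!k))"

definition lam :: "nat \<Rightarrow> (nat list \<Rightarrow> real) \<Rightarrow> nat list \<Rightarrow> real" where
  "lam N \<mu> js = (\<Sum>is\<in>pidx N. HH N is js * \<mu> is) / 4^N"

lemma kern:
  assumes "is \<in> pidx N" "a < 2^N" "b < 2^N" "c < 2^N" "e < 2^N"
    and Q: "\<And>i a b c e. i < 4 \<Longrightarrow> a < 2 \<Longrightarrow> b < 2 \<Longrightarrow> c < 2 \<Longrightarrow> e < 2 \<Longrightarrow>
      complex_of_real (w i) * (\<Sum>j<4. complex_of_real (hh i j) * F j a c * cnj (F j b e)) = 2 * G i a b c e"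
  shows "complex_of_real (\<Prod>k<N. w (is!k)) * (\<Sum>js\<in>pidx N. complex_of_real (HH N is js) * ptensor F js $$ (a, c) * cnj (ptensor F js $$ (b, e)))
     = 2^N * (\<Prod>k<N. G (is!k) (qbit k a) (qbit k b) (qbit k c) (qbit k e))"
proof -
  have "(\<Sum>js\<in>pidx N. complex_of_real (HH N is js) * ptensor F js $$ (a, c) * cnj (ptensor F js $$ (b, e)))
     = (\<Sum>js\<in>pidx N. \<Prod>k<N. complex_of_real (hh (is!k) (js!k)) * F (js!k) (qbit k a) (qbit k c) * cnj (F (js!k) (qbit k b) (qbit k e)))"
    by (intro sum.cong refl) (simp add: pt_idx assms HH_def prod.distrib)
  also have "\<dots> = (\<Prod>k<N. \<Sum>j<4. complex_of_real (hh (is!k) j) * F j (qbit k a) (qbit k c) * cnj (F j (qbit k b) (qbit k e)))"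
    by (rule PS1)
  finally have 1: "(\<Sum>js\<in>pidx N. complex_of_real (HH N is js) * ptensor F js $$ (a, c) * cnj (ptensor F js $$ (b, e))) = \<dots>" .
  have "complex_of_real (\<Prod>k<N. w (is!k)) * (\<Prod>k<N. \<Sum>j<4. complex_of_real (hh (is!k) j) * F j (qbit k a) (qbit k c) * cnj (F j (qbit k b) (qbit k e)))
     = (\<Prod>k<N. complex_of_real (w (is!k)) * (\<Sum>j<4. complex_of_real (hh (is!k) j) * F j (qbit k a) (qbit k c) * cnj (F j (qbit k b) (qbit k e))))"
    by (simp add: prod.distrib)
  also have "\<dots> = (\<Prod>k<N. 2 * G (is!k) (qbit k a) (qbit k b) (qbit k c) (qbit k e))"
    by (intro prod.cong refl Q) (auto simp: pidx_lt[OF assms(1)] qbit_lt)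
  also have "\<dots> = 2^N * (\<Prod>k<N. G (is!k) (qbit k a) (qbit k b) (qbit k c) (qbit k e))"
    by (simp add: prod.distrib)
  finally show ?thesis using 1 by simp
qed

lemma mtrace_mult: "A \<in> carrier_mat d d \<Longrightarrow> X \<in> carrier_mat d d \<Longrightarrow>
    mtrace (A * X) = (\<Sum>e<d. \<Sum>c<d. A $$ (e, c) * X $$ (c, e))"
  unfolding mtrace_def by (intro sum.cong refl) (auto simp: scalar_prod_def atLeast0LessThan)

lemma map_gen:
  assumes X: "X \<in> carrier_mat (2^N) (2^N)" and ab: "a < 2^N" "b < 2^N"
    and Z: "\<And>is a b c e. is \<in> pidx N \<Longrightarrow> a < 2^N \<Longrightarrow> b < 2^N \<Longrightarrow> c < 2^N \<Longrightarrow> e < 2^N \<Longrightarrow>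
      complex_of_real (w is) * (\<Sum>js\<in>pidx N. complex_of_real (HH N is js) * K js $$ (a, c) * cnj (K js $$ (b, e)))
       = 2^N * (pauli_tensor is $$ (e, c) * Z is a b)"
  shows "(\<Sum>is\<in>pidx N. complex_of_real (\<mu> is / 2^N) * mtrace (pauli_tensor is * X) * Z is a b)
      = Wm (2^N) (pidx N) (lam N (\<lambda>is. w is * \<mu> is)) K X $$ (a, b)"
proof -
  let ?d = "2^N::nat"
  have "Wm ?d (pidx N) (lam N (\<lambda>is. w is * \<mu> is)) K X $$ (a, b)
     = (\<Sum>js\<in>pidx N. \<Sum>is\<in>pidx N. complex_of_real (HH N is js * (w is * \<mu> is) / 4^N) *
          (\<Sum>x<?d. \<Sum>y<?d. K js $$ (a, x) * X $$ (x, y) * cnj (K js $$ (b, y))))"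
    by (simp add: Wm_idx ab lam_def sum_divide_distrib sum_distrib_right)
  also have "\<dots> = (\<Sum>is\<in>pidx N. \<Sum>js\<in>pidx N. complex_of_real (HH N is js * (w is * \<mu> is) / 4^N) *
          (\<Sum>x<?d. \<Sum>y<?d. K js $$ (a, x) * X $$ (x, y) * cnj (K js $$ (b, y))))"
    by (rule sum.swap)
  also have "\<dots> = (\<Sum>is\<in>pidx N. complex_of_real (\<mu> is / 4^N) * (\<Sum>x<?d. \<Sum>y<?d. X $$ (x, y) *
          (complex_of_real (w is) * (\<Sum>js\<in>pidx N. complex_of_real (HH N is js) * K js $$ (a, x) * cnj (K js $$ (b, y))))))"
    by (intro sum.cong refl)
       (simp add: sum_distrib_left sum_distrib_right sum.swap[of _ "pidx N" "{..<?d}"] mult_ac)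
  also have "\<dots> = (\<Sum>is\<in>pidx N. complex_of_real (\<mu> is / 4^N) * (\<Sum>x<?d. \<Sum>y<?d. X $$ (x, y) *
          (2^N * (pauli_tensor is $$ (y, x) * Z is a b))))"
    by (intro sum.cong refl) (simp add: Z ab)
  also have "\<dots> = (\<Sum>is\<in>pidx N. complex_of_real (\<mu> is / 2^N) * mtrace (pauli_tensor is * X) * Z is a b)"
  proof (intro sum.cong refl)
    fix "is" assume "is": "is \<in> pidx N"
    have pc: "pauli_tensor is \<in> carrier_mat ?d ?d" using pt_carrier[OF "is"] by (simp add: pt_pauli)
    have "(4::complex)^N = 2^N * 2^N" by (simp add: power_mult_distrib[symmetric])
    then show "complex_of_real (\<mu> is / 4^N) * (\<Sum>x<?d. \<Sum>y<?d. X $$ (x, y) *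
          (2^N * (pauli_tensor is $$ (y, x) * Z is a b))) =
        complex_of_real (\<mu> is / 2^N) * mtrace (pauli_tensor is * X) * Z is a b"
    proof -
      have sw: "(\<Sum>e<?d. \<Sum>c<?d. pauli_tensor is $$ (e, c) * X $$ (c, e)) = (\<Sum>c<?d. \<Sum>e<?d. pauli_tensor is $$ (e, c) * X $$ (c, e))"
        by (rule sum.swap)
      show ?thesis
        unfolding mtrace_mult[OF pc X] sw using \<open>(4::complex)^N = 2^N * 2^N\<close>
        by (simp add: sum_distrib_left sum_distrib_right mult_ac)
    qed
  qed
  finally show ?thesis by simp
qed

definition nuv :: "nat \<Rightarrow> nat list \<Rightarrow> real" where
  "nuv N is = (\<Prod>k<N. nu (is!k))"

lemma pm_idx: "a < 2^N \<Longrightarrow> b < 2^N \<Longrightarrow> pauli_map N \<mu> X $$ (a, b) =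
   (\<Sum>is\<in>pidx N. complex_of_real (\<mu> is / 2 ^ N) * mtrace (pauli_tensor is * X) * pauli_tensor is $$ (a, b))"
  by (simp add: pauli_map_def)
lemma pm_carrier: "pauli_map N \<mu> X \<in> carrier_mat (2^N) (2^N)" by (simp add: pauli_map_def)
lemma pm_dims[simp]: "dim_row (pauli_map N \<mu> X) = 2^N" "dim_col (pauli_map N \<mu> X) = 2^N"
  by (simp_all add: pauli_map_def)

lemma mapA: assumes X: "X \<in> carrier_mat (2^N) (2^N)"
  shows "pauli_map N \<mu> X = Wm (2^N) (pidx N) (lam N \<mu>) (ptensor pauli) X"
proof (rule eq_matI)
  fix a b assume ab: "a < dim_row (Wm (2^N) (pidx N) (lam N \<mu>) (ptensor pauli) X)"
    "b < dim_col (Wm (2^N) (pidx N) (lam N \<mu>) (ptensor pauli) X)"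
  have Z: "complex_of_real ((\<lambda>_. 1) is) * (\<Sum>js\<in>pidx N. complex_of_real (HH N is js) * ptensor pauli js $$ (a, c) * cnj (ptensor pauli js $$ (b, e)))
       = 2^N * (pauli_tensor is $$ (e, c) * pauli_tensor is $$ (a, b))"
    if h: "is \<in> pidx N" "a < 2^N" "b < 2^N" "c < 2^N" "e < 2^N" for "is" a b c e
  proof -
    have "complex_of_real (\<Prod>k<N. 1) * (\<Sum>js\<in>pidx N. complex_of_real (HH N is js) * ptensor pauli js $$ (a, c) * cnj (ptensor pauli js $$ (b, e)))
       = 2^N * (\<Prod>k<N. (\<lambda>i a b c e. pauli i e c * pauli i a b) (is!k) (qbit k a) (qbit k b) (qbit k c) (qbit k e))"
      by (rule kern[OF h]) (subgoal_tac "(\<Sum>j<4. complex_of_real (hh i j) * pauli j a c * cnj (pauli j b e)) = 2 * pauli i e c * pauli i a b", simp add: mult.assoc, simp add: Q1)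
    then show ?thesis using h by (simp add: pt_pauli pt_idx prod.distrib)
  qed
  have "pauli_map N \<mu> X $$ (a, b) = (\<Sum>is\<in>pidx N. complex_of_real (\<mu> is / 2 ^ N) * mtrace (pauli_tensor is * X) * pauli_tensor is $$ (a, b))"
    using ab by (simp add: pm_idx)
  also have "\<dots> = Wm (2^N) (pidx N) (lam N (\<lambda>is. 1 * \<mu> is)) (ptensor pauli) X $$ (a, b)"
    by (rule map_gen[OF X, where w = "\<lambda>_. 1"]) (use ab Z in auto)
  finally show "pauli_map N \<mu> X $$ (a, b) = Wm (2^N) (pidx N) (lam N \<mu>) (ptensor pauli) X $$ (a, b)" by simp
qed simp_all

lemma mapC: assumes X: "X \<in> carrier_mat (2^N) (2^N)"
  shows "transpose_mat (pauli_map N \<mu> X) = Wm (2^N) (pidx N) (lam N (\<lambda>is. nuv N is * \<mu> is)) (ptensor yp) X"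
proof (rule eq_matI)
  fix a b assume ab: "a < dim_row (Wm (2^N) (pidx N) (lam N (\<lambda>is. nuv N is * \<mu> is)) (ptensor yp) X)"
    "b < dim_col (Wm (2^N) (pidx N) (lam N (\<lambda>is. nuv N is * \<mu> is)) (ptensor yp) X)"
  have Z: "complex_of_real (nuv N is) * (\<Sum>js\<in>pidx N. complex_of_real (HH N is js) * ptensor yp js $$ (a, c) * cnj (ptensor yp js $$ (b, e)))
       = 2^N * (pauli_tensor is $$ (e, c) * pauli_tensor is $$ (b, a))"
    if h: "is \<in> pidx N" "a < 2^N" "b < 2^N" "c < 2^N" "e < 2^N" for "is" a b c e
  proof -
    have "complex_of_real (\<Prod>k<N. nu (is!k)) * (\<Sum>js\<in>pidx N. complex_of_real (HH N is js) * ptensor yp js $$ (a, c) * cnj (ptensor yp js $$ (b, e)))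
       = 2^N * (\<Prod>k<N. (\<lambda>i a b c e. pauli i e c * pauli i b a) (is!k) (qbit k a) (qbit k b) (qbit k c) (qbit k e))"
      by (rule kern[OF h]) (subgoal_tac "complex_of_real (nu i) * (\<Sum>j<4. complex_of_real (hh i j) * yp j a c * cnj (yp j b e)) = 2 * pauli i e c * pauli i b a", simp add: mult.assoc, simp add: Q2)
    then show ?thesis using h by (simp add: pt_pauli pt_idx prod.distrib nuv_def)
  qed
  have "transpose_mat (pauli_map N \<mu> X) $$ (a, b) = (\<Sum>is\<in>pidx N. complex_of_real (\<mu> is / 2 ^ N) * mtrace (pauli_tensor is * X) * pauli_tensor is $$ (b, a))"
    using ab by (simp add: pm_idx)
  also have "\<dots> = Wm (2^N) (pidx N) (lam N (\<lambda>is. nuv N is * \<mu> is)) (ptensor yp) X $$ (a, b)"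
    by (rule map_gen[OF X, where w = "nuv N" and Z = "\<lambda>is a b. pauli_tensor is $$ (b, a)"]) (use ab Z in auto)
  finally show "transpose_mat (pauli_map N \<mu> X) $$ (a, b) = Wm (2^N) (pidx N) (lam N (\<lambda>is. nuv N is * \<mu> is)) (ptensor yp) X $$ (a, b)" .
qed simp_all

definition hs :: "nat \<Rightarrow> complex mat \<Rightarrow> complex mat \<Rightarrow> complex" where
  "hs d L K = (\<Sum>a<d. \<Sum>i<d. cnj (L $$ (i, a)) * K $$ (i, a))"

definition pair :: "nat \<Rightarrow> (complex mat \<Rightarrow> complex mat) \<Rightarrow> (complex mat \<Rightarrow> complex mat) \<Rightarrow> complex" where
  "pair d \<Phi> \<Psi> = (\<Sum>a<d. \<Sum>b<d. \<Sum>i<d. \<Sum>j<d. cnj (\<Psi> (Em d a b) $$ (i, j)) * \<Phi> (Em d a b) $$ (i, j))"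

lemma Em_carrier: "Em d a b \<in> carrier_mat d d" by (simp add: Em_def)

lemma Wm_Em: "a < d \<Longrightarrow> b < d \<Longrightarrow> i < d \<Longrightarrow> j < d \<Longrightarrow>
   Wm d A c K (Em d a b) $$ (i, j) = (\<Sum>s\<in>A. complex_of_real (c s) * (K s $$ (i, a) * cnj (K s $$ (j, b))))"
proof -
  assume h: "a < d" "b < d" "i < d" "j < d"
  have "(\<Sum>x<d. \<Sum>y<d. K s $$ (i, x) * Em d a b $$ (x, y) * cnj (K s $$ (j, y))) = K s $$ (i, a) * cnj (K s $$ (j, b))" for s
  proof -
    have e: "K s $$ (i, x) * Em d a b $$ (x, y) * cnj (K s $$ (j, y)) =
       (if x = a then (if y = b then K s $$ (i, a) * cnj (K s $$ (j, b)) else 0) else 0)" if "x < d" "y < d" for x y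
      using that by (auto simp: Em_def)
    have "(\<Sum>x<d. \<Sum>y<d. K s $$ (i, x) * Em d a b $$ (x, y) * cnj (K s $$ (j, y)))
        = (\<Sum>x<d. if x = a then (\<Sum>y<d. if y = b then K s $$ (i, a) * cnj (K s $$ (j, b)) else 0) else 0)"
      by (intro sum.cong refl) (simp add: e)
    also have "\<dots> = K s $$ (i, a) * cnj (K s $$ (j, b))" using h by simp
    finally show ?thesis .
  qed
  then show ?thesis using h by (simp add: Wm_idx)
qed

lemma chi_Wm: "chi d (Wm d A c K) L = (\<Sum>s\<in>A. complex_of_real (c s) * (hs d L (K s) * cnj (hs d L (K s))))"
proof -
  have "chi d (Wm d A c K) L = (\<Sum>a<d. \<Sum>b<d. \<Sum>i<d. \<Sum>j<d. \<Sum>s\<in>A. complex_of_real (c s) *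
      (cnj (L $$ (i, a)) * K s $$ (i, a) * (L $$ (j, b) * cnj (K s $$ (j, b)))))"
    unfolding chi_def by (intro sum.cong refl) (simp add: Wm_Em sum_distrib_left sum_distrib_right mult_ac)
  also have "\<dots> = (\<Sum>s\<in>A. \<Sum>a<d. \<Sum>b<d. \<Sum>i<d. \<Sum>j<d. complex_of_real (c s) *
      (cnj (L $$ (i, a)) * K s $$ (i, a) * (L $$ (j, b) * cnj (K s $$ (j, b)))))"
    by (simp only: sum.swap[of _ "{..<d}" A])
  also have "\<dots> = (\<Sum>s\<in>A. complex_of_real (c s) * (hs d L (K s) * cnj (hs d L (K s))))"
  proof (intro sum.cong refl)
    fix s
    have "hs d L (K s) * cnj (hs d L (K s)) = (\<Sum>a<d. \<Sum>b<d. \<Sum>i<d. \<Sum>j<d.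
      (cnj (L $$ (i, a)) * K s $$ (i, a) * (L $$ (j, b) * cnj (K s $$ (j, b)))))"
      unfolding hs_def by (simp only: cnj_sum sum_product complex_cnj_mult complex_cnj_cnj)
    then show "(\<Sum>a<d. \<Sum>b<d. \<Sum>i<d. \<Sum>j<d. complex_of_real (c s) *
      (cnj (L $$ (i, a)) * K s $$ (i, a) * (L $$ (j, b) * cnj (K s $$ (j, b)))))
      = complex_of_real (c s) * (hs d L (K s) * cnj (hs d L (K s)))"
      by (simp add: sum_distrib_left)
  qed
  finally show ?thesis .
qed

lemma pair_Wm: "pair d \<Phi> (Wm d A c K) = (\<Sum>s\<in>A. complex_of_real (c s) * chi d \<Phi> (K s))"
proof -
  have "pair d \<Phi> (Wm d A c K) = (\<Sum>a<d. \<Sum>b<d. \<Sum>i<d. \<Sum>j<d. \<Sum>s\<in>A. complex_of_real (c s) *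
     (cnj (K s $$ (i, a)) * \<Phi> (Em d a b) $$ (i, j) * K s $$ (j, b)))"
    unfolding pair_def by (intro sum.cong refl) (simp add: Wm_Em sum_distrib_left sum_distrib_right mult_ac)
  also have "\<dots> = (\<Sum>s\<in>A. \<Sum>a<d. \<Sum>b<d. \<Sum>i<d. \<Sum>j<d. complex_of_real (c s) *
     (cnj (K s $$ (i, a)) * \<Phi> (Em d a b) $$ (i, j) * K s $$ (j, b)))"
    by (simp only: sum.swap[of _ "{..<d}" A])
  also have "\<dots> = (\<Sum>s\<in>A. complex_of_real (c s) * chi d \<Phi> (K s))"
    unfolding chi_def by (simp add: sum_distrib_left)
  finally show ?thesis .
qed

lemma chi_cong: "(\<And>X. X \<in> carrier_mat d d \<Longrightarrow> \<Phi> X = \<Phi>' X) \<Longrightarrow> chi d \<Phi> L = chi d \<Phi>' L"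
  unfolding chi_def by (simp add: Em_carrier)
lemma pair_cong: "(\<And>X. X \<in> carrier_mat d d \<Longrightarrow> \<Phi> X = \<Phi>' X) \<Longrightarrow> (\<And>X. X \<in> carrier_mat d d \<Longrightarrow> \<Psi> X = \<Psi>' X)
   \<Longrightarrow> pair d \<Phi> \<Psi> = pair d \<Phi>' \<Psi>'"
  unfolding pair_def by (simp add: Em_carrier)

lemma pair_add: "(\<And>X. X \<in> carrier_mat d d \<Longrightarrow> \<Phi> X \<in> carrier_mat d d) \<Longrightarrow> (\<And>X. X \<in> carrier_mat d d \<Longrightarrow> \<Phi>' X \<in> carrier_mat d d)
   \<Longrightarrow> pair d (\<lambda>X. \<Phi> X + \<Phi>' X) \<Psi> = pair d \<Phi> \<Psi> + pair d \<Phi>' \<Psi>"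
proof -
  assume h: "\<And>X. X \<in> carrier_mat d d \<Longrightarrow> \<Phi> X \<in> carrier_mat d d" "\<And>X. X \<in> carrier_mat d d \<Longrightarrow> \<Phi>' X \<in> carrier_mat d d"
  have c: "\<Phi> (Em d a b) \<in> carrier_mat d d" "\<Phi>' (Em d a b) \<in> carrier_mat d d" for a b using h Em_carrier by auto
  show ?thesis unfolding pair_def sum.distrib[symmetric]
  proof (intro sum.cong refl)
    fix a b i j assume "a \<in> {..<d}" "b \<in> {..<d}" "i \<in> {..<d}" "j \<in> {..<d}"
    then show "cnj (\<Psi> (Em d a b) $$ (i, j)) * (\<Phi> (Em d a b) + \<Phi>' (Em d a b)) $$ (i, j) =
      cnj (\<Psi> (Em d a b) $$ (i, j)) * \<Phi> (Em d a b) $$ (i, j) + cnj (\<Psi> (Em d a b) $$ (i, j)) * \<Phi>' (Em d a b) $$ (i, j)"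
      using c[of a b] by (auto simp: distrib_left)
  qed
qed

lemma pair_tr: "(\<And>X. X \<in> carrier_mat d d \<Longrightarrow> S X \<in> carrier_mat d d) \<Longrightarrow> (\<And>X. X \<in> carrier_mat d d \<Longrightarrow> \<Psi> X \<in> carrier_mat d d)
   \<Longrightarrow> pair d (\<lambda>X. transpose_mat (S X)) \<Psi> = pair d S (\<lambda>X. transpose_mat (\<Psi> X))"
proof -
  assume h: "\<And>X. X \<in> carrier_mat d d \<Longrightarrow> S X \<in> carrier_mat d d" "\<And>X. X \<in> carrier_mat d d \<Longrightarrow> \<Psi> X \<in> carrier_mat d d"
  have c: "S (Em d a b) \<in> carrier_mat d d" "\<Psi> (Em d a b) \<in> carrier_mat d d" for a b using h Em_carrier by auto
  have dm: "dim_row (S (Em d a b)) = d" "dim_col (S (Em d a b)) = d"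
     "dim_row (\<Psi> (Em d a b)) = d" "dim_col (\<Psi> (Em d a b)) = d" for a b using c[of a b] by auto
  have "pair d (\<lambda>X. transpose_mat (S X)) \<Psi> = (\<Sum>a<d. \<Sum>b<d. \<Sum>i<d. \<Sum>j<d. cnj (\<Psi> (Em d a b) $$ (i, j)) * S (Em d a b) $$ (j, i))"
    unfolding pair_def by (intro sum.cong refl) (simp add: dm)
  also have "\<dots> = (\<Sum>a<d. \<Sum>b<d. \<Sum>j<d. \<Sum>i<d. cnj (\<Psi> (Em d a b) $$ (i, j)) * S (Em d a b) $$ (j, i))"
    by (intro sum.cong refl sum.swap)
  also have "\<dots> = pair d S (\<lambda>X. transpose_mat (\<Psi> X))"
    unfolding pair_def by (intro sum.cong refl) (simp add: dm)
  finally show ?thesis .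
qed

lemma prod_delta: assumes "is \<in> pidx N" "js \<in> pidx N"
  shows "(\<Prod>k<N. if is!k = js!k then (2::complex) else 0) = (if is = js then 2^N else 0)"
proof (cases "is = js")
  case True then show ?thesis by simp
next
  case False
  have "\<exists>k<N. is!k \<noteq> js!k"
  proof (rule ccontr)
    assume "\<not> (\<exists>k<N. is!k \<noteq> js!k)"
    then have "is = js" using assms by (intro nth_equalityI) (auto simp: pidx_len)
    then show False using False by simp
  qed
  then show ?thesis using False by auto
qed

lemma orth: assumes "is \<in> pidx N" "js \<in> pidx N"
  and Q: "\<And>i j. i < 4 \<Longrightarrow> j < 4 \<Longrightarrow> (\<Sum>x<2. \<Sum>y<2. cnj (F j y x) * F i y x) = (if i = j then 2 else 0)"
  shows "hs (2^N) (ptensor F js) (ptensor F is) = (if is = js then 2^N else 0)"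
proof -
  have "hs (2^N) (ptensor F js) (ptensor F is) = (\<Sum>a<2^N. \<Sum>i<2^N. \<Prod>k<N. cnj (F (js!k) (qbit k i) (qbit k a)) * F (is!k) (qbit k i) (qbit k a))"
    unfolding hs_def by (intro sum.cong refl) (simp add: pt_idx[OF assms(1)] pt_idx[OF assms(2)] prod.distrib)
  also have "\<dots> = (\<Sum>a<2^N. \<Prod>k<N. \<Sum>y<2. cnj (F (js!k) y (qbit k a)) * F (is!k) y (qbit k a))"
    by (intro sum.cong refl PS2)
  also have "\<dots> = (\<Prod>k<N. \<Sum>x<2. \<Sum>y<2. cnj (F (js!k) y x) * F (is!k) y x)"
    by (rule PS2)
  also have "\<dots> = (\<Prod>k<N. if is!k = js!k then 2 else 0)"
    by (intro prod.cong refl Q) (auto simp: pidx_lt[OF assms(1)] pidx_lt[OF assms(2)])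
  also have "\<dots> = (if is = js then 2^N else 0)" by (rule prod_delta[OF assms(1,2)])
  finally show ?thesis .
qed

lemma Q3': "i<4 \<Longrightarrow> j < 4 \<Longrightarrow> (\<Sum>x<2. \<Sum>y<2. cnj (yp j y x) * yp i y x) = (if i = j then 2 else 0)"
  by (subst sum.swap) (rule Q3)
lemma Q4': "i<4 \<Longrightarrow> j < 4 \<Longrightarrow> (\<Sum>x<2. \<Sum>y<2. cnj (pauli j y x) * pauli i y x) = (if i = j then 2 else 0)"
  by (subst sum.swap) (rule Q4)

lemma chi_Wm_pt: assumes "js \<in> pidx N"
  and Q: "\<And>i j. i < 4 \<Longrightarrow> j < 4 \<Longrightarrow> (\<Sum>x<2. \<Sum>y<2. cnj (F j y x) * F i y x) = (if i = j then 2 else 0)"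
  shows "chi (2^N) (Wm (2^N) (pidx N) c (ptensor F)) (ptensor F js) = complex_of_real (4^N * c js)"
proof -
  have "chi (2^N) (Wm (2^N) (pidx N) c (ptensor F)) (ptensor F js)
     = (\<Sum>is\<in>pidx N. if is = js then complex_of_real (c js) * (2^N * 2^N) else 0)"
    unfolding chi_Wm by (intro sum.cong refl) (simp add: orth[OF _ assms(1) Q])
  also have "\<dots> = complex_of_real (4^N * c js)" using assms(1) finite_pidx
    by (simp add: power_mult_distrib[symmetric])
  finally show ?thesis .
qed

lemma chiA: "js \<in> pidx N \<Longrightarrow> chi (2^N) (pauli_map N \<mu>) (ptensor pauli js) = complex_of_real (4^N * lam N \<mu> js)"
  by (subst chi_cong[OF mapA], assumption, rule chi_Wm_pt, assumption, rule Q4')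

lemma chiC: "js \<in> pidx N \<Longrightarrow> chi (2^N) (\<lambda>X. transpose_mat (pauli_map N \<mu> X)) (ptensor yp js)
   = complex_of_real (4^N * lam N (\<lambda>is. nuv N is * \<mu> is) js)"
  by (subst chi_cong[OF mapC], assumption, rule chi_Wm_pt, assumption, rule Q3')

lemma HH_sym: "HH N is js = HH N js is"
  unfolding HH_def by (intro prod.cong refl) (auto simp: hh_def)

lemma prod_delta4: assumes "is \<in> pidx N" "js \<in> pidx N"
  shows "(\<Prod>k<N. if is!k = js!k then (4::real) else 0) = (if is = js then 4^N else 0)"
proof (cases "is = js")
  case True then show ?thesis by simp
next
  case False
  have "\<exists>k<N. is!k \<noteq> js!k"
  proof (rule ccontr)
    assume "\<not> (\<exists>k<N. is!k \<noteq> js!k)"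
    then have "is = js" using assms by (intro nth_equalityI) (auto simp: pidx_len)
    then show False using False by simp
  qed
  then show ?thesis using False by auto
qed

lemma H_orth: assumes "is \<in> pidx N" "ks \<in> pidx N"
  shows "(\<Sum>js\<in>pidx N. HH N is js * HH N ks js) = (if is = ks then 4^N else 0)"
proof -
  have "(\<Sum>js\<in>pidx N. HH N is js * HH N ks js) = (\<Sum>js\<in>pidx N. \<Prod>k<N. hh (is!k) (js!k) * hh (ks!k) (js!k))"
    unfolding HH_def by (simp add: prod.distrib)
  also have "\<dots> = (\<Prod>k<N. \<Sum>j<4. hh (is!k) j * hh (ks!k) j)" by (rule PS1)
  also have "\<dots> = (\<Prod>k<N. if is!k = ks!k then 4 else 0)"
    by (intro prod.cong refl Q5) (auto simp: pidx_lt[OF assms(1)] pidx_lt[OF assms(2)])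
  also have "\<dots> = (if is = ks then 4^N else 0)" by (rule prod_delta4[OF assms])
  finally show ?thesis .
qed

lemma lam_inner: "(\<Sum>js\<in>pidx N. lam N \<mu> js * lam N \<kappa> js) = (\<Sum>is\<in>pidx N. \<mu> is * \<kappa> is) / 4^N"
proof -
  have "(\<Sum>js\<in>pidx N. lam N \<mu> js * lam N \<kappa> js)
     = (\<Sum>js\<in>pidx N. \<Sum>is\<in>pidx N. \<Sum>ks\<in>pidx N. (HH N is js * \<mu> is) * (HH N ks js * \<kappa> ks)) / (4^N * 4^N)"
    unfolding lam_def by (simp add: sum_product sum_divide_distrib)
  also have "(\<Sum>js\<in>pidx N. \<Sum>is\<in>pidx N. \<Sum>ks\<in>pidx N. (HH N is js * \<mu> is) * (HH N ks js * \<kappa> ks))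
      = (\<Sum>is\<in>pidx N. \<Sum>js\<in>pidx N. \<Sum>ks\<in>pidx N. (HH N is js * \<mu> is) * (HH N ks js * \<kappa> ks))"
    by (rule sum.swap)
  also have "\<dots> = (\<Sum>is\<in>pidx N. \<Sum>ks\<in>pidx N. \<Sum>js\<in>pidx N. (HH N is js * \<mu> is) * (HH N ks js * \<kappa> ks))"
    by (intro sum.cong refl sum.swap)
  also have "\<dots> = (\<Sum>is\<in>pidx N. \<Sum>ks\<in>pidx N. \<mu> is * \<kappa> ks * (\<Sum>js\<in>pidx N. HH N is js * HH N ks js))"
    by (simp add: sum_distrib_left mult_ac)
  also have "\<dots> = (\<Sum>is\<in>pidx N. \<Sum>ks\<in>pidx N. if ks = is then \<mu> is * \<kappa> is * 4^N else 0)"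
    by (intro sum.cong refl) (auto simp: H_orth)
  also have "\<dots> = (\<Sum>is\<in>pidx N. \<mu> is * \<kappa> is) * 4^N"
    by (simp add: finite_pidx sum_distrib_right)
  finally show ?thesis by simp
qed

lemma lam_inv: assumes "js' \<in> pidx N"
  shows "lam N (\<lambda>is. if is \<in> pidx N then (\<Sum>js\<in>pidx N. g js * HH N is js) / 4^N else 0) js' = g js' / 4^N"
proof -
  have "lam N (\<lambda>is. if is \<in> pidx N then (\<Sum>js\<in>pidx N. g js * HH N is js) / 4^N else 0) js'
     = (\<Sum>is\<in>pidx N. \<Sum>js\<in>pidx N. HH N is js' * (g js * HH N is js)) / (4^N * 4^N)"
    unfolding lam_def by (simp add: sum_distrib_left sum_divide_distrib)
  also have "(\<Sum>is\<in>pidx N. \<Sum>js\<in>pidx N. HH N is js' * (g js * HH N is js))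
     = (\<Sum>js\<in>pidx N. \<Sum>is\<in>pidx N. HH N is js' * (g js * HH N is js))" by (rule sum.swap)
  also have "\<dots> = (\<Sum>js\<in>pidx N. g js * (\<Sum>is\<in>pidx N. HH N js' is * HH N js is))"
    by (simp add: sum_distrib_left HH_sym mult_ac)
  also have "\<dots> = (\<Sum>js\<in>pidx N. if js = js' then g js' * 4^N else 0)"
    by (intro sum.cong refl) (auto simp: H_orth assms)
  also have "\<dots> = g js' * 4^N" using assms by (simp add: finite_pidx)
  finally show ?thesis by simp
qed

lemma nuv_sq: "nuv N is * nuv N is = 1"
  unfolding nuv_def prod.distrib[symmetric] by (intro prod.neutral) (auto simp: nu_def)

lemma lam_lin: "lam N (\<lambda>z. x z - t * y z) js = lam N x js - t * lam N y js"
  unfolding lam_def by (simp add: right_diff_distrib sum_subtractf sum_distrib_left diff_divide_distrib mult_ac)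

lemma lam_ind: "is0 \<in> pidx N \<Longrightarrow> lam N (\<lambda>is. if is = is0 then 1 else 0) js = HH N is0 js / 4^N"
  unfolding lam_def by (simp add: finite_pidx if_distrib cong: if_cong)

definition lf :: "((nat list \<Rightarrow> real) \<Rightarrow> real) \<Rightarrow> bool" where
  "lf f \<longleftrightarrow> (\<forall>x y t. f (\<lambda>z. x z - t * y z) = f x - t * f y)"

lemma lfD: "lf f \<Longrightarrow> f (\<lambda>z. x z - t * y z) = f x - t * f y" by (simp add: lf_def)

lemma lf_neg: "lf f \<Longrightarrow> f (\<lambda>z. 0 - 1 * x z) = - f x"
proof -
  assume "lf f"
  have "f (\<lambda>z. x z - 1 * x z) = f x - 1 * f x" by (rule lfD[OF \<open>lf f\<close>])
  then have "f (\<lambda>z. 0) = 0" by simp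
  moreover have "f (\<lambda>z. (\<lambda>z. 0) z - 1 * x z) = f (\<lambda>z. 0) - 1 * f x" by (rule lfD[OF \<open>lf f\<close>])
  ultimately show ?thesis by simp
qed

lemma farkas:
  assumes "finite I" "\<forall>i\<in>I. lf (a i)" "lf b" "\<forall>x. (\<forall>i\<in>I. a i x \<ge> 0) \<longrightarrow> b x \<ge> 0"
  shows "\<exists>\<gamma>. (\<forall>i\<in>I. \<gamma> i \<ge> 0) \<and> (\<forall>x. b x = (\<Sum>i\<in>I. \<gamma> i * a i x))"
  using assms
proof (induction I arbitrary: a b rule: finite_induct)
  case empty
  have "b x = 0" for x
  proof -
    have "b x \<ge> 0" using empty by auto
    moreover have "b (\<lambda>z. 0 - 1 * x z) \<ge> 0" using empty by auto
    ultimately show ?thesis using lf_neg[OF empty(2)] by simp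
  qed
  then show ?case by simp
next
  case (insert j I)
  show ?case
  proof (cases "\<forall>x. (\<forall>i\<in>I. a i x \<ge> 0) \<longrightarrow> b x \<ge> 0")
    case True
    then obtain \<gamma> where g: "\<forall>i\<in>I. \<gamma> i \<ge> 0" "\<forall>x. b x = (\<Sum>i\<in>I. \<gamma> i * a i x)"
      using insert.IH[of a b] insert.prems by auto
    define \<gamma>' where "\<gamma>' = \<gamma>(j := 0)"
    have "(\<Sum>i\<in>I. \<gamma>' i * a i x) = (\<Sum>i\<in>I. \<gamma> i * a i x)" for x
      unfolding \<gamma>'_def using insert.hyps by (intro sum.cong) auto
    then show ?thesis using g insert.hyps
      by (intro exI[of _ \<gamma>']) (auto simp: \<gamma>'_def)
  next
    case False
    then obtain x0 where x0: "\<forall>i\<in>I. a i x0 \<ge> 0" "b x0 < 0" by (auto simp: not_le)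
    define r where "r = a j x0"
    have r: "r < 0"
    proof (rule ccontr)
      assume "\<not> r < 0"
      then have "\<forall>i\<in>insert j I. a i x0 \<ge> 0" using x0 r_def by auto
      then show False using insert.prems(3) x0 by force
    qed
    define a' where "a' = (\<lambda>i x. a i x - (a i x0 / r) * a j x)"
    define b' where "b' = (\<lambda>x. b x - (b x0 / r) * a j x)"
    have lfj: "lf (a j)" using insert.prems by auto
    have lfa: "\<forall>i\<in>I. lf (a' i)"
    proof
      fix i assume "i \<in> I"
      then have "lf (a i)" using insert.prems by auto
      then show "lf (a' i)" by (simp add: lf_def a'_def lfD[OF \<open>lf (a i)\<close>] lfD[OF lfj] algebra_simps diff_divide_distrib add_divide_distrib)
    qed
    have lfb: "lf b'" by (simp add: lf_def b'_def lfD[OF insert.prems(2)] lfD[OF lfj] algebra_simps diff_divide_distrib add_divide_distrib)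
    have hyp: "\<forall>x. (\<forall>i\<in>I. a' i x \<ge> 0) \<longrightarrow> b' x \<ge> 0"
    proof (intro allI impI)
      fix x assume h: "\<forall>i\<in>I. a' i x \<ge> 0"
      define y where "y = (\<lambda>z. x z - (a j x / r) * x0 z)"
      have ay: "a i y = a' i x" if "i \<in> insert j I" for i
      proof -
        have "lf (a i)" using that insert.prems by auto
        then have "a i y = a i x - (a j x / r) * a i x0" unfolding y_def by (rule lfD)
        then show ?thesis unfolding a'_def by simp
      qed
      have "a j y = 0" using ay[of j] r unfolding a'_def r_def by simp
      then have "\<forall>i\<in>insert j I. a i y \<ge> 0" using h ay by auto
      then have "b y \<ge> 0" using insert.prems(3) by blast
      moreover have "b y = b' x" unfolding y_def b'_def by (subst lfD[OF insert.prems(2)]) (simp add: mult.commute)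
      ultimately show "b' x \<ge> 0" by simp
    qed
    obtain \<gamma> where g: "\<forall>i\<in>I. \<gamma> i \<ge> 0" "\<forall>x. b' x = (\<Sum>i\<in>I. \<gamma> i * a' i x)"
      using insert.IH[OF lfa lfb hyp] by blast
    define cj where "cj = (b x0 - (\<Sum>i\<in>I. \<gamma> i * a i x0)) / r"
    have "(\<Sum>i\<in>I. \<gamma> i * a i x0) \<ge> 0" using g(1) x0(1) by (intro sum_nonneg) auto
    then have cj: "cj \<ge> 0" unfolding cj_def using r x0(2)
      by (intro divide_nonpos_neg) auto
    define \<gamma>' where "\<gamma>' = \<gamma>(j := cj)"
    have "b x = (\<Sum>i\<in>insert j I. \<gamma>' i * a i x)" for x
    proof -
      have s: "(\<Sum>i\<in>I. \<gamma>' i * a i x) = (\<Sum>i\<in>I. \<gamma> i * a i x)"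
        unfolding \<gamma>'_def using insert.hyps by (intro sum.cong) auto
      have "b x = b' x + (b x0 / r) * a j x" unfolding b'_def by simp
      also have "b' x = (\<Sum>i\<in>I. \<gamma> i * a i x) - (\<Sum>i\<in>I. \<gamma> i * a i x0) / r * a j x"
      proof -
        have "b' x = (\<Sum>i\<in>I. \<gamma> i * a i x - (\<gamma> i * a i x0 / r) * a j x)"
          using g(2) unfolding a'_def by (simp add: right_diff_distrib mult_ac)
        also have "\<dots> = (\<Sum>i\<in>I. \<gamma> i * a i x) - (\<Sum>i\<in>I. \<gamma> i * a i x0) / r * a j x"
          by (simp add: sum_subtractf sum_distrib_right sum_divide_distrib)
        finally show ?thesis .
      qed
      finally show ?thesis using insert.hyps s
        by (simp add: \<gamma>'_def cj_def diff_divide_distrib algebra_simps)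
    qed
    then show ?thesis using g(1) cj
      by (intro exI[of _ \<gamma>']) (auto simp: \<gamma>'_def)
  qed
qed


lemma cp_cong: assumes h: "\<And>X. X \<in> carrier_mat d d \<Longrightarrow> \<Phi> X = \<Psi> X"
  shows "cp_map d \<Phi> = cp_map d \<Psi>"
proof -
  have l: "lin_map d \<Phi> = lin_map d \<Psi>"
    unfolding lin_map_def by (auto simp: h)
  have "ampl k d \<Phi> X = ampl k d \<Psi> X" for k X
    unfolding ampl_def by (simp add: h)
  then show ?thesis unfolding cp_map_def l by simp
qed

lemma pos4: "0 \<le> (4::real)^N * x \<Longrightarrow> 0 \<le> x"
proof -
  assume h: "0 \<le> (4::real)^N * x"
  have "(0::real) < 4^N" by simp
  show "0 \<le> x"
  proof (rule ccontr)
    assume "\<not> 0 \<le> x"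
    then have "x < 0" by simp
    then have "4^N * x < 0" using mult_pos_neg[of "4^N" x] by simp
    then show False using h by simp
  qed
qed

lemma nnc_real: "nnc (complex_of_real x) \<Longrightarrow> x \<ge> 0" by (simp add: nnc_def)

lemma CP_char: assumes "\<mu> \<in> tens N"
  shows "\<mu> \<in> CP N \<longleftrightarrow> (\<forall>js\<in>pidx N. lam N \<mu> js \<ge> 0)"
proof
  assume "\<mu> \<in> CP N"
  then have cp: "cp_map (2^N) (pauli_map N \<mu>)" by (simp add: CP_def)
  show "\<forall>js\<in>pidx N. lam N \<mu> js \<ge> 0"
  proof
    fix js assume js: "js \<in> pidx N"
    have "nnc (chi (2^N) (pauli_map N \<mu>) (ptensor pauli js))" by (rule cp_chi[OF cp])
    then have "nnc (complex_of_real (4^N * lam N \<mu> js))" unfolding chiA[OF js] .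
    then have "4^N * lam N \<mu> js \<ge> 0" by (rule nnc_real)
    then show "lam N \<mu> js \<ge> 0" by (rule pos4)
  qed
next
  assume h: "\<forall>js\<in>pidx N. lam N \<mu> js \<ge> 0"
  have "cp_map (2^N) (Wm (2^N) (pidx N) (lam N \<mu>) (ptensor pauli))" using h by (intro cp_Wm) auto
  moreover have "cp_map (2^N) (pauli_map N \<mu>) = cp_map (2^N) (Wm (2^N) (pidx N) (lam N \<mu>) (ptensor pauli))"
    by (rule cp_cong) (rule mapA)
  ultimately have "cp_map (2^N) (pauli_map N \<mu>)" by simp
  then show "\<mu> \<in> CP N" using assms by (simp add: CP_def)
qed

lemma coCP_char: assumes "\<mu> \<in> tens N"
  shows "\<mu> \<in> coCP N \<longleftrightarrow> (\<forall>js\<in>pidx N. lam N (\<lambda>is. nuv N is * \<mu> is) js \<ge> 0)"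
proof
  assume "\<mu> \<in> coCP N"
  then have cp: "cp_map (2^N) (\<lambda>X. transpose_mat (pauli_map N \<mu> X))" by (simp add: coCP_def)
  show "\<forall>js\<in>pidx N. lam N (\<lambda>is. nuv N is * \<mu> is) js \<ge> 0"
  proof
    fix js assume js: "js \<in> pidx N"
    have "nnc (chi (2^N) (\<lambda>X. transpose_mat (pauli_map N \<mu> X)) (ptensor yp js))" by (rule cp_chi[OF cp])
    then have "nnc (complex_of_real (4^N * lam N (\<lambda>is. nuv N is * \<mu> is) js))" unfolding chiC[OF js] .
    then have "4^N * lam N (\<lambda>is. nuv N is * \<mu> is) js \<ge> 0" by (rule nnc_real)
    then show "lam N (\<lambda>is. nuv N is * \<mu> is) js \<ge> 0" by (rule pos4)
  qed
next
  assume h: "\<forall>js\<in>pidx N. lam N (\<lambda>is. nuv N is * \<mu> is) js \<ge> 0"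
  have "cp_map (2^N) (Wm (2^N) (pidx N) (lam N (\<lambda>is. nuv N is * \<mu> is)) (ptensor yp))" using h by (intro cp_Wm) auto
  moreover have "cp_map (2^N) (\<lambda>X. transpose_mat (pauli_map N \<mu> X)) = cp_map (2^N) (Wm (2^N) (pidx N) (lam N (\<lambda>is. nuv N is * \<mu> is)) (ptensor yp))"
    by (rule cp_cong) (rule mapC)
  ultimately have "cp_map (2^N) (\<lambda>X. transpose_mat (pauli_map N \<mu> X))" by simp
  then show "\<mu> \<in> coCP N" using assms by (simp add: coCP_def)
qed

lemma cp_carrier: "cp_map d T \<Longrightarrow> X \<in> carrier_mat d d \<Longrightarrow> T X \<in> carrier_mat d d"
  by (simp add: cp_map_def lin_map_def)

lemma dec_dual: assumes mu: "\<mu> \<in> Dec N" and ka: "\<kappa> \<in> CP N" "\<kappa> \<in> coCP N"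
  shows "(\<Sum>is\<in>pidx N. \<mu> is * \<kappa> is) \<ge> 0"
proof -
  let ?d = "2^N::nat"
  obtain T S where TS: "cp_map ?d T" "cp_map ?d S"
     "\<forall>X \<in> carrier_mat ?d ?d. pauli_map N \<mu> X = T X + transpose_mat (S X)"
    using mu unfolding Dec_def by blast
  have kt: "\<kappa> \<in> tens N" using ka by (simp add: CP_def)
  have l1: "\<forall>js\<in>pidx N. lam N \<kappa> js \<ge> 0" using CP_char[OF kt] ka by blast
  have l2: "\<forall>js\<in>pidx N. lam N (\<lambda>is. nuv N is * \<kappa> is) js \<ge> 0" using coCP_char[OF kt] ka by blast
  have "pair ?d (pauli_map N \<mu>) (pauli_map N \<kappa>) = pair ?d (pauli_map N \<mu>) (Wm ?d (pidx N) (lam N \<kappa>) (ptensor pauli))"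
    by (rule pair_cong) (simp_all add: mapA)
  also have "\<dots> = (\<Sum>js\<in>pidx N. complex_of_real (lam N \<kappa> js) * complex_of_real (4^N * lam N \<mu> js))"
    unfolding pair_Wm by (intro sum.cong refl) (simp add: chiA)
  also have "\<dots> = complex_of_real (4^N * (\<Sum>js\<in>pidx N. lam N \<mu> js * lam N \<kappa> js))"
    by (simp add: sum_distrib_left mult_ac)
  also have "\<dots> = complex_of_real (\<Sum>is\<in>pidx N. \<mu> is * \<kappa> is)"
    by (simp add: lam_inner)
  finally have e1: "pair ?d (pauli_map N \<mu>) (pauli_map N \<kappa>) = complex_of_real (\<Sum>is\<in>pidx N. \<mu> is * \<kappa> is)" .
  have "pair ?d (pauli_map N \<mu>) (pauli_map N \<kappa>) = pair ?d (\<lambda>X. T X + transpose_mat (S X)) (pauli_map N \<kappa>)"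
    by (rule pair_cong) (simp_all add: TS(3))
  also have "\<dots> = pair ?d T (pauli_map N \<kappa>) + pair ?d (\<lambda>X. transpose_mat (S X)) (pauli_map N \<kappa>)"
    by (rule pair_add) (use cp_carrier[OF TS(1)] cp_carrier[OF TS(2)] in auto)
  finally have e2: "pair ?d (pauli_map N \<mu>) (pauli_map N \<kappa>) = \<dots>" .
  have "pair ?d T (pauli_map N \<kappa>) = pair ?d T (Wm ?d (pidx N) (lam N \<kappa>) (ptensor pauli))"
    by (rule pair_cong) (simp_all add: mapA)
  also have "\<dots> = (\<Sum>js\<in>pidx N. complex_of_real (lam N \<kappa> js) * chi ?d T (ptensor pauli js))"
    by (rule pair_Wm)
  finally have n1: "nnc (pair ?d T (pauli_map N \<kappa>))"
    using l1 cp_chi[OF TS(1)] by (auto intro!: nnc_sum nnc_scale)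
  have "pair ?d (\<lambda>X. transpose_mat (S X)) (pauli_map N \<kappa>) = pair ?d S (\<lambda>X. transpose_mat (pauli_map N \<kappa> X))"
    by (rule pair_tr) (use cp_carrier[OF TS(2)] pm_carrier in auto)
  also have "\<dots> = pair ?d S (Wm ?d (pidx N) (lam N (\<lambda>is. nuv N is * \<kappa> is)) (ptensor yp))"
    by (rule pair_cong) (simp_all add: mapC)
  also have "\<dots> = (\<Sum>js\<in>pidx N. complex_of_real (lam N (\<lambda>is. nuv N is * \<kappa> is) js) * chi ?d S (ptensor yp js))"
    by (rule pair_Wm)
  finally have n2: "nnc (pair ?d (\<lambda>X. transpose_mat (S X)) (pauli_map N \<kappa>))"
    using l2 cp_chi[OF TS(2)] by (auto intro!: nnc_sum nnc_scale)
  have "nnc (complex_of_real (\<Sum>is\<in>pidx N. \<mu> is * \<kappa> is))"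
    using e1 e2 nnc_add[OF n1 n2] by simp
  then show ?thesis by (rule nnc_real)
qed

lemma pm_add: "pauli_map N (\<lambda>x. a x + b x) X = pauli_map N a X + pauli_map N b X"
proof (rule eq_matI)
  fix i j assume "i < dim_row (pauli_map N a X + pauli_map N b X)" "j < dim_col (pauli_map N a X + pauli_map N b X)"
  then have ij: "i < 2^N" "j < 2^N" by auto
  show "pauli_map N (\<lambda>x. a x + b x) X $$ (i, j) = (pauli_map N a X + pauli_map N b X) $$ (i, j)"
  proof -
    have "(pauli_map N a X + pauli_map N b X) $$ (i, j) = pauli_map N a X $$ (i, j) + pauli_map N b X $$ (i, j)"
      using ij by simp
    also have "\<dots> = pauli_map N (\<lambda>x. a x + b x) X $$ (i, j)"
      unfolding pm_idx[OF ij] sum.distrib[symmetric]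
      by (intro sum.cong refl) (simp add: add_divide_distrib distrib_right)
    finally show ?thesis by simp
  qed
qed auto

lemma msum_dec: assumes "a \<in> CP N" "b \<in> coCP N" shows "(\<lambda>x. a x + b x) \<in> Dec N"
proof -
  have t: "(\<lambda>x. a x + b x) \<in> tens N" using assms by (simp add: CP_def coCP_def tens_def)
  have "cp_map (2^N) (pauli_map N a)" "cp_map (2^N) (\<lambda>X. transpose_mat (pauli_map N b X))"
    using assms by (simp_all add: CP_def coCP_def)
  moreover have "\<forall>X \<in> carrier_mat (2^N) (2^N). pauli_map N (\<lambda>x. a x + b x) X
      = pauli_map N a X + transpose_mat ((\<lambda>X. transpose_mat (pauli_map N b X)) X)"
    by (simp add: pm_add)
  ultimately show ?thesis using t unfolding Dec_def by blast
qed

lemma lam_scale: "lam N (\<lambda>is. c * f is) js = c * lam N f js"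
  unfolding lam_def by (simp add: sum_distrib_left mult_ac)

lemma lam_restr: "lam N (\<lambda>is. if is \<in> pidx N then x is else 0) js = lam N x js"
  unfolding lam_def by (intro arg_cong2[where f = "(/)"] sum.cong refl) auto

lemma tens_restr: "(\<lambda>is. if is \<in> pidx N then x is else 0) \<in> tens N"
  by (simp add: tens_def)

lemma dual_msum: assumes mu: "\<mu> \<in> dual_cone N (CP N \<inter> coCP N)"
  shows "\<mu> \<in> msum (CP N) (coCP N)"
proof -
  have mt: "\<mu> \<in> tens N" and md: "\<forall>\<kappa>\<in>CP N \<inter> coCP N. (\<Sum>is\<in>pidx N. \<mu> is * \<kappa> is) \<ge> 0"
    using mu by (auto simp: dual_cone_def)
  define I where "I = pidx N \<times> (UNIV :: bool set)"
  define af where "af = (\<lambda>(js, bo) x. if bo then lam N x js else lam N (\<lambda>is. nuv N is * x is) js)"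
  define b where "b = (\<lambda>x. \<Sum>is\<in>pidx N. \<mu> is * x is)"
  have fI: "finite I" unfolding I_def by (simp add: finite_pidx)
  have lfa: "\<forall>i\<in>I. lf (af i)"
  proof
    fix i assume "i \<in> I"
    obtain js bo where i: "i = (js, bo)" by force
    have "lam N (\<lambda>is. nuv N is * (x is - t * y is)) js
        = lam N (\<lambda>is. nuv N is * x is) js - t * lam N (\<lambda>is. nuv N is * y is) js" for x y t
      using lam_lin[of N "\<lambda>is. nuv N is * x is" t "\<lambda>is. nuv N is * y is" js] by (simp add: algebra_simps)
    then show "lf (af i)" unfolding lf_def af_def i by (simp add: lam_lin)
  qed
  have lfb: "lf b" unfolding lf_def b_def
    by (simp add: right_diff_distrib sum_subtractf sum_distrib_left mult_ac)
  have hyp: "\<forall>x. (\<forall>i\<in>I. af i x \<ge> 0) \<longrightarrow> b x \<ge> 0"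
  proof (intro allI impI)
    fix x assume h: "\<forall>i\<in>I. af i x \<ge> 0"
    define \<kappa> where "\<kappa> = (\<lambda>is. if is \<in> pidx N then x is else 0)"
    have kt: "\<kappa> \<in> tens N" unfolding \<kappa>_def by (rule tens_restr)
    have "\<forall>js\<in>pidx N. lam N \<kappa> js \<ge> 0"
    proof
      fix js assume "js \<in> pidx N"
      then have "af (js, True) x \<ge> 0" using h unfolding I_def by blast
      then show "lam N \<kappa> js \<ge> 0" unfolding \<kappa>_def lam_restr af_def by simp
    qed
    then have k1: "\<kappa> \<in> CP N" using CP_char[OF kt] by blast
    have "\<forall>js\<in>pidx N. lam N (\<lambda>is. nuv N is * \<kappa> is) js \<ge> 0"
    proof
      fix js assume "js \<in> pidx N"
      then have a0: "af (js, False) x \<ge> 0" using h unfolding I_def by blast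
      have e2: "(\<lambda>is. nuv N is * \<kappa> is) = (\<lambda>is. if is \<in> pidx N then nuv N is * x is else 0)"
        unfolding \<kappa>_def by auto
      show "lam N (\<lambda>is. nuv N is * \<kappa> is) js \<ge> 0" unfolding e2 lam_restr using a0 by (simp add: af_def)
    qed
    then have k2: "\<kappa> \<in> coCP N" using coCP_char[OF kt] by blast
    have "(\<Sum>is\<in>pidx N. \<mu> is * \<kappa> is) \<ge> 0" using md k1 k2 by blast
    moreover have "(\<Sum>is\<in>pidx N. \<mu> is * \<kappa> is) = b x" unfolding b_def \<kappa>_def by (intro sum.cong) auto
    ultimately show "b x \<ge> 0" by simp
  qed
  obtain \<gamma> where g: "\<forall>i\<in>I. \<gamma> i \<ge> 0" "\<forall>x. b x = (\<Sum>i\<in>I. \<gamma> i * af i x)"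
    using farkas[OF fI lfa lfb hyp] by blast
  have sumI: "(\<Sum>i\<in>I. \<gamma> i * af i x) = (\<Sum>js\<in>pidx N. \<gamma> (js, True) * lam N x js + \<gamma> (js, False) * lam N (\<lambda>is. nuv N is * x is) js)" for x
  proof -
    have "(\<Sum>i\<in>I. \<gamma> i * af i x) = (\<Sum>js\<in>pidx N. \<Sum>bo\<in>UNIV. \<gamma> (js, bo) * af (js, bo) x)"
      unfolding I_def by (simp add: sum.cartesian_product)
    then show ?thesis by (simp add: UNIV_bool af_def add.commute)
  qed
  define p where "p = (\<lambda>is. if is \<in> pidx N then (\<Sum>js\<in>pidx N. \<gamma> (js, True) * HH N is js) / 4^N else 0)"
  define q where "q = (\<lambda>is. if is \<in> pidx N then nuv N is * ((\<Sum>js\<in>pidx N. \<gamma> (js, False) * HH N is js) / 4^N) else 0)"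
  have pC: "p \<in> CP N"
  proof -
    have "p \<in> tens N" unfolding p_def tens_def by auto
    moreover have "\<forall>js\<in>pidx N. lam N p js \<ge> 0"
    proof
      fix js assume js: "js \<in> pidx N"
      have "lam N p js = \<gamma> (js, True) / 4^N" unfolding p_def by (rule lam_inv[OF js])
      moreover have "\<gamma> (js, True) \<ge> 0" using g(1) js unfolding I_def by blast
      ultimately show "lam N p js \<ge> 0" by simp
    qed
    ultimately show ?thesis using CP_char by blast
  qed
  have qC: "q \<in> coCP N"
  proof -
    have qt: "q \<in> tens N" unfolding q_def tens_def by auto
    have nq: "(\<lambda>is. nuv N is * q is) = (\<lambda>is. if is \<in> pidx N then (\<Sum>js\<in>pidx N. \<gamma> (js, False) * HH N is js) / 4^N else 0)"
      unfolding q_def by (auto simp: mult.assoc[symmetric] nuv_sq)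
    have "\<forall>js\<in>pidx N. lam N (\<lambda>is. nuv N is * q is) js \<ge> 0"
    proof
      fix js assume js: "js \<in> pidx N"
      have "lam N (\<lambda>is. nuv N is * q is) js = \<gamma> (js, False) / 4^N" unfolding nq by (rule lam_inv[OF js])
      moreover have "\<gamma> (js, False) \<ge> 0" using g(1) js unfolding I_def by blast
      ultimately show "lam N (\<lambda>is. nuv N is * q is) js \<ge> 0" by simp
    qed
    then show ?thesis using coCP_char[OF qt] by blast
  qed
  have "\<mu> = (\<lambda>x. p x + q x)"
  proof
    fix is0
    show "\<mu> is0 = p is0 + q is0"
    proof (cases "is0 \<in> pidx N")
      case False
      then show ?thesis using mt unfolding tens_def p_def q_def by auto
    next
      case True
      define e where "e = (\<lambda>is. if is = is0 then (1::real) else 0)"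
      have be: "b e = \<mu> is0" unfolding b_def e_def using True by (simp add: finite_pidx if_distrib cong: if_cong)
      have ne: "(\<lambda>is. nuv N is * e is) = (\<lambda>is. nuv N is0 * e is)" unfolding e_def by auto
      then have lamn: "lam N (\<lambda>is. nuv N is * e is) js = nuv N is0 * (HH N is0 js / 4^N)" for js
        using lam_scale[of N "nuv N is0" e js] lam_ind[OF True, of js] unfolding e_def by simp
      have "(\<Sum>i\<in>I. \<gamma> i * af i e) = (\<Sum>js\<in>pidx N. \<gamma> (js, True) * (HH N is0 js / 4^N) + \<gamma> (js, False) * (nuv N is0 * (HH N is0 js / 4^N)))"
        unfolding sumI using lamn lam_ind[OF True] unfolding e_def by simp
      also have "\<dots> = p is0 + q is0"
        unfolding p_def q_def using True
        by (simp add: sum.distrib sum_divide_distrib sum_distrib_left mult_ac)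
      finally show ?thesis using g(2) be by simp
    qed
  qed
  then show ?thesis unfolding msum_def using pC qC by blast
qed

theorem mainTheorem3:
  fixes N :: nat
  shows "Dec N = msum (CP N) (coCP N) \<and> msum (CP N) (coCP N) = dual_cone N (CP N \<inter> coCP N)"
proof -
  have A: "Dec N \<subseteq> dual_cone N (CP N \<inter> coCP N)"
  proof
    fix \<mu> assume m: "\<mu> \<in> Dec N"
    then have "\<mu> \<in> tens N" by (simp add: Dec_def)
    then show "\<mu> \<in> dual_cone N (CP N \<inter> coCP N)"
      unfolding dual_cone_def using dec_dual[OF m] by blast
  qed
  have B: "dual_cone N (CP N \<inter> coCP N) \<subseteq> msum (CP N) (coCP N)"
    using dual_msum by blast
  have C: "msum (CP N) (coCP N) \<subseteq> Dec N"
    unfolding msum_def using msum_dec by blast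
  show ?thesis using A B C by blast
qed

end
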